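(* Let $\Psi$ be a performance metric whose representation $\Psi(\mathbf{s},\mathbf{y})=\Phi(\widehat{TP}(\mathbf{s},\mathbf{y}),v(\mathbf{s}),p(\mathbf{y}))$ is such that $\Phi(\cdot,v,p)$ does not depend on its first argument. Then $\Psi$ satisfies the probability ranking principle, in the sense that for any set $\mathbf{x}$ of $n$ instances and any conditional label distribution $\mathbb{P}(\mathbf{y}\mid\mathbf{x})=\prod_{i=1}^n\eta_i^{y_i}(1-\eta_i)^{1-y_i}$, there is a maximizer $\mathbf{s}^*$ of $U_\Psi(\cdot;\mathbb{P})$ over $\{0,1\}^n$ with $\min\{\eta_i:s^*_i=1\}\ge\max\{\eta_i:s^*_i=0\}$.
   Context: Labels are binary. For predictions $\mathbf{s}\in\{0,1\}^n$ and labels $\mathbf{y}\in\{0,1\}^n$, $\widehat{TP}(\mathbf{s},\mathbf{y})=\frac1n\sum_i s_iy_i$, $v(\mathbf{s})=\frac1n\sum_i s_i$, $p(\mathbf{y})=\frac1n\sum_i y_i$; a metric $\Psi$ is a function of the empirical confusion matrix (true/false positive/negative rates), equivalently a function $\Phi(\widehat{TP},v,p)$. $\eta_i=\mathbb{P}(Y=1\mid x_i)$, and $U_\Psi(\mathbf{s};\mathbb{P})=\mathbb{E}_{\mathbf{y}\sim\mathbb{P}(\cdot\mid\mathbf{x})}\Psi(\mathbf{s},\mathbf{y})$. *)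

theory Defs
  imports Complex_Main
begin

definition binvecs :: "nat \<Rightarrow> (nat \<Rightarrow> real) set" where
  "binvecs n = {s. (\<forall>i<n. s i = 0 \<or> s i = 1) \<and> (\<forall>i\<ge>n. s i = 0)}"

definition TP_hat :: "nat \<Rightarrow> (nat \<Rightarrow> real) \<Rightarrow> (nat \<Rightarrow> real) \<Rightarrow> real" where
  "TP_hat n s y = (\<Sum>i<n. s i * y i) / real n"

definition vrate :: "nat \<Rightarrow> (nat \<Rightarrow> real) \<Rightarrow> real" where
  "vrate n s = (\<Sum>i<n. s i) / real n"

definition prate :: "nat \<Rightarrow> (nat \<Rightarrow> real) \<Rightarrow> real" where
  "prate n y = (\<Sum>i<n. y i) / real n"

definition label_prob :: "nat \<Rightarrow> (nat \<Rightarrow> real) \<Rightarrow> (nat \<Rightarrow> real) \<Rightarrow> real" where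
  "label_prob n \<eta> y = (\<Prod>i<n. if y i = 1 then \<eta> i else 1 - \<eta> i)"

definition U_metric :: "(real \<Rightarrow> real \<Rightarrow> real \<Rightarrow> real) \<Rightarrow> nat \<Rightarrow> (nat \<Rightarrow> real) \<Rightarrow> (nat \<Rightarrow> real) \<Rightarrow> real" where
  "U_metric \<Phi> n \<eta> s =
     (\<Sum>y\<in>binvecs n. label_prob n \<eta> y * \<Phi> (TP_hat n s y) (vrate n s) (prate n y))"

end

theory Submission
  imports Defs
begin

lemma binvecs_finite: "finite (binvecs n)"
proof -
  have "binvecs n \<subseteq> {f. \<forall>x. (x \<in> {..<n} \<longrightarrow> f x \<in> {0,1}) \<and> (x \<notin> {..<n} \<longrightarrow> f x = 0)}"
    unfolding binvecs_def by auto
  moreover have "finite {f::nat\<Rightarrow>real. \<forall>x. (x \<in> {..<n} \<longrightarrow> f x \<in> {0,1}) \<and> (x \<notin> {..<n} \<longrightarrow> f x = 0)}"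
    by (rule finite_set_of_finite_funs) auto
  ultimately show ?thesis by (rule finite_subset)
qed

lemma finite_argmax:
  fixes f :: "'a \<Rightarrow> real"
  assumes "finite A" "A \<noteq> {}"
  shows "\<exists>x\<in>A. \<forall>y\<in>A. f y \<le> f x"
proof -
  have "Max (f ` A) \<in> f ` A" using assms by simp
  then obtain x where x: "x \<in> A" "f x = Max (f ` A)" by auto
  show ?thesis using x assms by (intro bexI[of _ x]) auto
qed

theorem proposition2:
  fixes \<Phi> :: "real \<Rightarrow> real \<Rightarrow> real \<Rightarrow> real" and n :: nat and \<eta> :: "nat \<Rightarrow> real"
  assumes indep: "\<forall>t t' v p. \<Phi> t v p = \<Phi> t' v p"
    and eta_range: "\<forall>i<n. 0 \<le> \<eta> i \<and> \<eta> i \<le> 1"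
  shows "\<exists>s\<in>binvecs n. (\<forall>s'\<in>binvecs n. U_metric \<Phi> n \<eta> s' \<le> U_metric \<Phi> n \<eta> s) \<and>
           (\<forall>i<n. \<forall>j<n. s i = 1 \<and> s j = 0 \<longrightarrow> \<eta> j \<le> \<eta> i)"
proof -
  let ?U = "U_metric \<Phi> n \<eta>"
  let ?B = "binvecs n"
  have Ueq: "?U s = ?U s'" if "(\<Sum>i<n. s i) = (\<Sum>i<n. s' i)" for s s'
  proof -
    have v: "vrate n s = vrate n s'" using that unfolding vrate_def by simp
    show ?thesis unfolding U_metric_def
      by (rule sum.cong, simp, metis v indep)
  qed
  have "(\<lambda>_. 0) \<in> ?B" unfolding binvecs_def by auto
  then obtain s0 where s0: "s0 \<in> ?B" "\<forall>y\<in>?B. ?U y \<le> ?U s0"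
    using finite_argmax[OF binvecs_finite, of n ?U] by blast
  let ?S = "{s\<in>?B. ?U s = ?U s0}"
  have "finite ?S" using binvecs_finite by simp
  moreover have "?S \<noteq> {}" using s0 by auto
  ultimately obtain s where s: "s \<in> ?S" "\<forall>y\<in>?S. (\<lambda>s. \<Sum>i<n. s i * \<eta> i) y \<le> (\<Sum>i<n. s i * \<eta> i)"
    using finite_argmax[of ?S "\<lambda>s. \<Sum>i<n. s i * \<eta> i"] by blast
  have sB: "s \<in> ?B" and smax: "\<forall>y\<in>?B. ?U y \<le> ?U s" using s s0 by auto
  have "\<forall>i<n. \<forall>j<n. s i = 1 \<and> s j = 0 \<longrightarrow> \<eta> j \<le> \<eta> i"
  proof (intro allI impI, rule ccontr)
    fix i j assume ij: "i < n" "j < n" "s i = 1 \<and> s j = 0" and lt: "\<not> \<eta> j \<le> \<eta> i"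
    have ne: "i \<noteq> j" using ij by auto
    define s' where "s' = (\<lambda>k. s k + (if k = j then 1 else 0) - (if k = i then 1 else 0))"
    have s'B: "s' \<in> ?B" using sB ij ne unfolding binvecs_def s'_def by auto
    have sum1: "(\<Sum>k<n. s' k) = (\<Sum>k<n. s k)"
      using ij unfolding s'_def by (simp add: sum.distrib sum_subtractf)
    have sum2: "(\<Sum>k<n. s' k * \<eta> k) = (\<Sum>k<n. s k * \<eta> k) + \<eta> j - \<eta> i"
    proof -
      have "(\<Sum>k<n. s' k * \<eta> k) = (\<Sum>k<n. s k * \<eta> k + (if k = j then \<eta> k else 0) - (if k = i then \<eta> k else 0))"
        unfolding s'_def by (rule sum.cong) (auto simp: algebra_simps)
      also have "\<dots> = (\<Sum>k<n. s k * \<eta> k) + \<eta> j - \<eta> i"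
        using ij by (simp add: sum.distrib sum_subtractf)
      finally show ?thesis .
    qed
    have "s' \<in> ?S" using s'B Ueq[OF sum1] s by auto
    then have "(\<Sum>k<n. s' k * \<eta> k) \<le> (\<Sum>k<n. s k * \<eta> k)" using s(2) by blast
    with sum2 lt show False by simp
  qed
  then show ?thesis using sB smax by blast
qed

end
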